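(* Let $G$ be a group, $\partial$ an endomorphism of $G$, and $a,\sigma$ fixed elements of $G$. Write $\sigma_i=\partial^{i-1}(\sigma)$ and $a_i=\partial^{i-1}(a)$ for $i\ge1$, and let $H$ be the subgroup of $G$ generated by all $\sigma_i$ and $a_i$. Define $x*y=x\cdot\partial y\cdot\sigma\cdot\partial x^{-1}$ and $x\circ y=x\cdot\partial y\cdot a$. Then $(H,*,\circ)$ is an ALD-system if and only if the elements $\sigma_i,a_i$ satisfy the relations: $\sigma_j\sigma_i=\sigma_i\sigma_j$ and $a_j\sigma_i=\sigma_ia_j$ for $j\ge i+2$; $a_j\sigma_i=\sigma_{i+1}a_j$ and $a_ja_i=a_{i+1}a_j$ for $j\le i-1$; $\sigma_j\sigma_i\sigma_j=\sigma_i\sigma_j\sigma_i$, $\sigma_i\sigma_ja_i=a_j\sigma_i$ and $\sigma_j\sigma_ia_j=a_i\sigma_i$ for $j=i+1$ (i.e., if and only if $H$ is a homomorphic image of $B_\bullet$ via $\sigma_i\mapsto\sigma_i$, $a_i\mapsto a_i$).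
   Context: An ALD-system is a set with two binary operations $*,\circ$ satisfying $x*(y*z)=(x*y)*(x*z)$, $x*(y*z)=(x\circ y)*z$ and $x*(y\circ z)=(x*y)\circ(x*z)$. $B_\bullet$ denotes the group presented by generators $\sigma_1,\sigma_2,\dots,a_1,a_2,\dots$ and the relations listed in the claim. *)

theory Defs
  imports "HOL-Algebra.Generated_Groups"
begin

definition ald_system :: "'a set \<Rightarrow> ('a \<Rightarrow> 'a \<Rightarrow> 'a) \<Rightarrow> ('a \<Rightarrow> 'a \<Rightarrow> 'a) \<Rightarrow> bool" where
  "ald_system S st ci \<longleftrightarrow>
     (\<forall>x\<in>S. \<forall>y\<in>S. st x y \<in> S \<and> ci x y \<in> S) \<and>
     (\<forall>x\<in>S. \<forall>y\<in>S. \<forall>z\<in>S.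
        st x (st y z) = st (st x y) (st x z) \<and>
        st x (st y z) = st (ci x y) z \<and>
        st x (ci y z) = ci (st x y) (st x z))"

definition ald_star :: "('a, 'b) monoid_scheme \<Rightarrow> ('a \<Rightarrow> 'a) \<Rightarrow> 'a \<Rightarrow> 'a \<Rightarrow> 'a \<Rightarrow> 'a" where
  "ald_star G d s x y = x \<otimes>\<^bsub>G\<^esub> d y \<otimes>\<^bsub>G\<^esub> s \<otimes>\<^bsub>G\<^esub> inv\<^bsub>G\<^esub> (d x)"

definition ald_circ :: "('a, 'b) monoid_scheme \<Rightarrow> ('a \<Rightarrow> 'a) \<Rightarrow> 'a \<Rightarrow> 'a \<Rightarrow> 'a \<Rightarrow> 'a" where
  "ald_circ G d a x y = x \<otimes>\<^bsub>G\<^esub> d y \<otimes>\<^bsub>G\<^esub> a"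

definition B_relations :: "('a, 'b) monoid_scheme \<Rightarrow> (nat \<Rightarrow> 'a) \<Rightarrow> (nat \<Rightarrow> 'a) \<Rightarrow> bool" where
  "B_relations G sig al \<longleftrightarrow>
    (\<forall>i\<ge>1. \<forall>j\<ge>1.
      (j \<ge> i + 2 \<longrightarrow>
         sig j \<otimes>\<^bsub>G\<^esub> sig i = sig i \<otimes>\<^bsub>G\<^esub> sig j \<and>
         al j \<otimes>\<^bsub>G\<^esub> sig i = sig i \<otimes>\<^bsub>G\<^esub> al j) \<and>
      (j + 1 \<le> i \<longrightarrow>
         al j \<otimes>\<^bsub>G\<^esub> sig i = sig (i + 1) \<otimes>\<^bsub>G\<^esub> al j \<and>
         al j \<otimes>\<^bsub>G\<^esub> al i = al (i + 1) \<otimes>\<^bsub>G\<^esub> al j) \<and>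
      (j = i + 1 \<longrightarrow>
         sig j \<otimes>\<^bsub>G\<^esub> sig i \<otimes>\<^bsub>G\<^esub> sig j = sig i \<otimes>\<^bsub>G\<^esub> sig j \<otimes>\<^bsub>G\<^esub> sig i \<and>
         sig i \<otimes>\<^bsub>G\<^esub> sig j \<otimes>\<^bsub>G\<^esub> al i = al j \<otimes>\<^bsub>G\<^esub> sig i \<and>
         sig j \<otimes>\<^bsub>G\<^esub> sig i \<otimes>\<^bsub>G\<^esub> al j = al i \<otimes>\<^bsub>G\<^esub> sig i))"

end

theory Submission
  imports Defs
begin

locale aldl = group G for G (structure) +
  fixes d :: "'a \<Rightarrow> 'a" and a s :: 'a
  assumes d_hom: "d \<in> hom G G" and a_c[simp]: "a \<in> carrier G" and s_c[simp]: "s \<in> carrier G"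
begin

lemma dc[simp]: "x \<in> carrier G \<Longrightarrow> d x \<in> carrier G"
  using d_hom unfolding hom_def by auto

lemma dm[simp]: "x \<in> carrier G \<Longrightarrow> y \<in> carrier G \<Longrightarrow> d (x \<otimes> y) = d x \<otimes> d y"
  using d_hom unfolding hom_def by auto

lemma ghom: "group_hom G G d"
  unfolding group_hom_def group_hom_axioms_def using d_hom is_group by auto

lemma d1[simp]: "d \<one> = \<one>"
  using group_hom.hom_one[OF ghom] by simp

lemma dinv[simp]: "x \<in> carrier G \<Longrightarrow> d (inv x) = inv (d x)"
  using group_hom.hom_inv[OF ghom] by simp

lemma dpc[simp]: "x \<in> carrier G \<Longrightarrow> (d ^^ n) x \<in> carrier G"
  by (induction n) auto

lemma dpm[simp]: "x \<in> carrier G \<Longrightarrow> y \<in> carrier G \<Longrightarrow> (d ^^ n) (x \<otimes> y) = (d ^^ n) x \<otimes> (d ^^ n) y"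
  by (induction n) auto

lemma dp1[simp]: "(d ^^ n) \<one> = \<one>"
  by (induction n) auto

lemma dpinv[simp]: "x \<in> carrier G \<Longrightarrow> (d ^^ n) (inv x) = inv ((d ^^ n) x)"
  by (induction n) auto

lemma ic1[simp]: "x \<in> carrier G \<Longrightarrow> y \<in> carrier G \<Longrightarrow> inv x \<otimes> (x \<otimes> y) = y"
  by (simp add: m_assoc[symmetric])

lemma ic2[simp]: "x \<in> carrier G \<Longrightarrow> y \<in> carrier G \<Longrightarrow> x \<otimes> (inv x \<otimes> y) = y"
  by (simp add: m_assoc[symmetric])

abbreviation "st \<equiv> ald_star G d s"
abbreviation "ci \<equiv> ald_circ G d a"

definition condA :: "'a set \<Rightarrow> bool" where "condA H \<longleftrightarrow> (\<forall>h\<in>H. s \<otimes> d (d h) = d (d h) \<otimes> s)"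
definition condB :: bool where "condB \<longleftrightarrow> d s \<otimes> (s \<otimes> d s) = s \<otimes> (d s \<otimes> s)"
definition condC :: "'a set \<Rightarrow> bool" where "condC H \<longleftrightarrow> (\<forall>h\<in>H. a \<otimes> d h = d (d h) \<otimes> a)"
definition condD :: bool where "condD \<longleftrightarrow> d s \<otimes> (s \<otimes> d a) = a \<otimes> s"
definition condE :: bool where "condE \<longleftrightarrow> s \<otimes> (d s \<otimes> a) = d a \<otimes> s"

lemma tail2: "x \<otimes> y = z \<otimes> w \<Longrightarrow> x \<in> carrier G \<Longrightarrow> y \<in> carrier G \<Longrightarrow> z \<in> carrier G \<Longrightarrow> w \<in> carrier G \<Longrightarrow> r \<in> carrier G \<Longrightarrow> x \<otimes> (y \<otimes> r) = z \<otimes> (w \<otimes> r)"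
  by (metis m_assoc)

lemma conds_imp_ald:
  assumes H: "subgroup H G" "s \<in> H" "a \<in> H" "\<And>x. x\<in>H \<Longrightarrow> d x \<in> H"
  and cA: "condA H" and cB: condB and cC: "condC H" and cD: condD and cE: condE
  shows "ald_system H st ci"
proof -
  have Hc[simp]: "x \<in> H \<Longrightarrow> x \<in> carrier G" for x using subgroup.mem_carrier[OF H(1)] by blast
  have Hi: "x \<in> H \<Longrightarrow> inv x \<in> H" for x using subgroup.m_inv_closed[OF H(1)] by blast
  have A1: "s \<otimes> (d (d h) \<otimes> r) = d (d h) \<otimes> (s \<otimes> r)" if "h \<in> H" "r \<in> carrier G" for h r
  proof -
    have "s \<otimes> d (d h) = d (d h) \<otimes> s" using cA that unfolding condA_def by blast
    then show ?thesis by (rule tail2) (use that in auto)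
  qed
  have A2: "s \<otimes> (inv (d (d h)) \<otimes> r) = inv (d (d h)) \<otimes> (s \<otimes> r)" if "h \<in> H" "r \<in> carrier G" for h r
    using A1[OF Hi[OF that(1)] that(2)] that by simp
  have B1: "s \<otimes> (d s \<otimes> (s \<otimes> (inv (d s) \<otimes> r))) = d s \<otimes> (s \<otimes> r)" if "r \<in> carrier G" for r
  proof -
    have e: "s \<otimes> (d s \<otimes> s) = d s \<otimes> (s \<otimes> d s)" using cB unfolding condB_def by simp
    have "s \<otimes> (d s \<otimes> (s \<otimes> (inv (d s) \<otimes> r))) = (s \<otimes> (d s \<otimes> s)) \<otimes> (inv (d s) \<otimes> r)"
      using that by (simp add: m_assoc)
    also have "\<dots> = (d s \<otimes> (s \<otimes> d s)) \<otimes> (inv (d s) \<otimes> r)" by (simp only: e)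
    also have "\<dots> = d s \<otimes> (s \<otimes> r)" using that by (simp add: m_assoc)
    finally show ?thesis .
  qed
  have C1: "a \<otimes> (d h \<otimes> r) = d (d h) \<otimes> (a \<otimes> r)" if "h \<in> H" "r \<in> carrier G" for h r
  proof -
    have "a \<otimes> d h = d (d h) \<otimes> a" using cC that unfolding condC_def by blast
    then show ?thesis by (rule tail2) (use that in auto)
  qed
  have C2: "inv (d (d h)) \<otimes> (a \<otimes> r) = a \<otimes> (inv (d h) \<otimes> r)" if "h \<in> H" "r \<in> carrier G" for h r
    using C1[OF Hi[OF that(1)] that(2)] that by simp
  have C3: "inv (d (d h)) \<otimes> a = a \<otimes> inv (d h)" if "h \<in> H" for h
    using C2[OF that, of "\<one>"] that by simp
  have E0: "s \<otimes> (d s \<otimes> a) = d a \<otimes> s" using cE unfolding condE_def by simp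
  have D1: "a \<otimes> (s \<otimes> (inv (d a) \<otimes> r)) = d s \<otimes> (s \<otimes> r)" if "r \<in> carrier G" for r
  proof -
    have e: "a \<otimes> s = d s \<otimes> (s \<otimes> d a)" using cD unfolding condD_def by simp
    have "a \<otimes> (s \<otimes> (inv (d a) \<otimes> r)) = (a \<otimes> s) \<otimes> (inv (d a) \<otimes> r)"
      using that by (simp add: m_assoc)
    also have "\<dots> = (d s \<otimes> (s \<otimes> d a)) \<otimes> (inv (d a) \<otimes> r)" by (simp only: e)
    also have "\<dots> = d s \<otimes> (s \<otimes> r)" using that by (simp add: m_assoc)
    finally show ?thesis .
  qed
  have E1: "s \<otimes> (d s \<otimes> (a \<otimes> r)) = d a \<otimes> (s \<otimes> r)" if "r \<in> carrier G" for r
  proof -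
    have e: "s \<otimes> (d s \<otimes> a) = d a \<otimes> s" using cE unfolding condE_def by simp
    have "s \<otimes> (d s \<otimes> (a \<otimes> r)) = (s \<otimes> (d s \<otimes> a)) \<otimes> r"
      using that by (simp add: m_assoc)
    also have "\<dots> = (d a \<otimes> s) \<otimes> r" by (simp only: e)
    also have "\<dots> = d a \<otimes> (s \<otimes> r)" using that by (simp add: m_assoc)
    finally show ?thesis .
  qed
  have cl: "\<forall>x\<in>H. \<forall>y\<in>H. st x y \<in> H \<and> ci x y \<in> H"
    using H unfolding ald_star_def ald_circ_def
    by (auto intro!: subgroup.m_closed[OF H(1)] Hi)
  have i1: "st x (st y z) = st (st x y) (st x z)" if "x \<in> H" "y \<in> H" "z \<in> H" for x y z
    using that unfolding ald_star_def
    by (simp add: m_assoc inv_mult_group A1 A2 B1)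
  have i2: "st x (st y z) = st (ci x y) z" if "x \<in> H" "y \<in> H" "z \<in> H" for x y z
    using that unfolding ald_star_def ald_circ_def
    by (simp add: m_assoc inv_mult_group A1 A2 C1 D1 H(4))
  have i3: "st x (ci y z) = ci (st x y) (st x z)" if "x \<in> H" "y \<in> H" "z \<in> H" for x y z
    using that unfolding ald_star_def ald_circ_def
    by (simp add: m_assoc inv_mult_group A1 A2 C2 C3 E0 E1 H(4))
  show ?thesis unfolding ald_system_def using cl i1 i2 i3 by blast
qed

lemma ald_imp_conds:
  assumes H: "subgroup H G" "s \<in> H" "a \<in> H"
  and ald: "ald_system H st ci"
  shows "condA H \<and> condB \<and> condC H \<and> condD \<and> condE"
proof -
  have Hc[simp]: "x \<in> H \<Longrightarrow> x \<in> carrier G" for x using subgroup.mem_carrier[OF H(1)] by blast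
  have one: "\<one> \<in> H" using subgroup.one_closed[OF H(1)] .
  have i1: "st x (st y z) = st (st x y) (st x z)" and i2: "st x (st y z) = st (ci x y) z"
    and i3: "st x (ci y z) = ci (st x y) (st x z)" if "x \<in> H" "y \<in> H" "z \<in> H" for x y z
    using ald that unfolding ald_system_def by blast+
  have eB: "d s \<otimes> s = s \<otimes> (d s \<otimes> (s \<otimes> inv (d s)))"
    using i1[OF one one one] by (simp add: ald_star_def m_assoc inv_mult_group)
  have cB: "d s \<otimes> (s \<otimes> d s) = s \<otimes> (d s \<otimes> s)"
    using arg_cong[OF eB, of "\<lambda>v. v \<otimes> d s"] by (simp add: m_assoc)
  have cA: "s \<otimes> d (d x) = d (d x) \<otimes> s" if x: "x \<in> H" for x
  proof -
    have e: "d s \<otimes> (s \<otimes> inv (d x)) = s \<otimes> (d s \<otimes> (inv (d (d x)) \<otimes> (s \<otimes> (d (d x) \<otimes> (inv (d s) \<otimes> inv (d x))))))"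
      using i1[OF x one one] x by (simp add: ald_star_def m_assoc inv_mult_group)
    have e2: "d s \<otimes> (s \<otimes> d s) = s \<otimes> (d s \<otimes> (inv (d (d x)) \<otimes> (s \<otimes> d (d x))))"
      using arg_cong[OF e, of "\<lambda>v. v \<otimes> d x \<otimes> d s"] x by (simp add: m_assoc)
    have e3: "s = inv (d (d x)) \<otimes> (s \<otimes> d (d x))"
      using e2 x by (simp add: cB)
    show ?thesis
      using arg_cong[OF e3, of "\<lambda>v. d (d x) \<otimes> v"] x by (simp add: m_assoc)
  qed
  have eD: "d s \<otimes> s = a \<otimes> (s \<otimes> inv (d a))"
    using i2[OF one one one] by (simp add: ald_star_def ald_circ_def m_assoc inv_mult_group)
  have cD: "d s \<otimes> (s \<otimes> d a) = a \<otimes> s"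
    using arg_cong[OF eD, of "\<lambda>v. v \<otimes> d a"] by (simp add: m_assoc)
  have cC: "a \<otimes> d z = d (d z) \<otimes> a" if z: "z \<in> H" for z
  proof -
    have e: "d (d z) \<otimes> (d s \<otimes> s) = a \<otimes> (d z \<otimes> (s \<otimes> inv (d a)))"
      using i2[OF one one z] z by (simp add: ald_star_def ald_circ_def m_assoc inv_mult_group)
    have e2: "d (d z) \<otimes> (a \<otimes> s) = a \<otimes> (d z \<otimes> s)"
      using arg_cong[OF e, of "\<lambda>v. v \<otimes> d a"] z by (simp add: m_assoc cD)
    show ?thesis
      using arg_cong[OF e2, of "\<lambda>v. v \<otimes> inv s"] z by (simp add: m_assoc)
  qed
  have cE: "s \<otimes> (d s \<otimes> a) = d a \<otimes> s"
    using i3[OF one one one] by (simp add: ald_star_def ald_circ_def m_assoc inv_mult_group)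
  show ?thesis unfolding condA_def condB_def condC_def condD_def condE_def
    using cA cB cC cD cE by blast
qed

lemma inv_comm_h:
  assumes e: "u \<otimes> p = q \<otimes> u" and c: "u \<in> carrier G" "p \<in> carrier G" "q \<in> carrier G"
  shows "u \<otimes> inv p = inv q \<otimes> u"
  using arg_cong[OF e, of "\<lambda>v. inv q \<otimes> v \<otimes> inv p"] c by (simp add: m_assoc)

lemma gen_comm:
  assumes S: "S \<subseteq> carrier G" and u: "u \<in> carrier G"
    and g: "\<And>x. x \<in> S \<Longrightarrow> u \<otimes> (d^^m) x = (d^^n) x \<otimes> u" and h: "h \<in> generate G S"
  shows "u \<otimes> (d^^m) h = (d^^n) h \<otimes> u"
  using h
proof (induction rule: generate.induct)
  case one
  then show ?case using u by simp
next
  case (incl h)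
  then show ?case using g by blast
next
  case (inv h)
  note hS = this
  have hc: "h \<in> carrier G" using S hS by blast
  show ?case using inv_comm_h[OF g[OF hS] u] hc by simp
next
  case (eng h1 h2)
  have c: "h1 \<in> carrier G" "h2 \<in> carrier G" using generate_in_carrier[OF S] eng.hyps by auto
  have "u \<otimes> (d^^m) (h1 \<otimes> h2) = (u \<otimes> (d^^m) h1) \<otimes> (d^^m) h2" using c u by (simp add: m_assoc)
  also have "\<dots> = ((d^^n) h1 \<otimes> u) \<otimes> (d^^m) h2" using eng.IH(1) by simp
  also have "\<dots> = (d^^n) h1 \<otimes> (u \<otimes> (d^^m) h2)" using c u by (simp add: m_assoc)
  also have "\<dots> = (d^^n) h1 \<otimes> ((d^^n) h2 \<otimes> u)" using eng.IH(2) by simp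
  also have "\<dots> = (d^^n) (h1 \<otimes> h2) \<otimes> u" using c u by (simp add: m_assoc)
  finally show ?case .
qed

lemma dnm: "(d^^n) ((d^^m) x) = (d^^(n+m)) x"
  by (simp add: funpow_add)

lemma dn2: "(d^^n) (d (d x)) = (d^^(n+2)) x"
  by (induction n) (auto simp: numeral_2_eq_2)

lemma dn1: "(d^^n) (d x) = (d^^(n+1)) x"
  by (induction n) auto

lemma d2: "(d^^2) x = d (d x)"
  by (simp add: numeral_2_eq_2)

definition sg :: "nat \<Rightarrow> 'a" where "sg i = (d^^(i-1)) s"
definition ag :: "nat \<Rightarrow> 'a" where "ag i = (d^^(i-1)) a"
definition HH :: "'a set" where "HH = generate G (sg ` {1..} \<union> ag ` {1..})"

lemma sgS[simp]: "sg (Suc m) = (d^^m) s" by (simp add: sg_def)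
lemma agS[simp]: "ag (Suc m) = (d^^m) a" by (simp add: ag_def)

lemma gens_c: "sg ` {1..} \<union> ag ` {1..} \<subseteq> carrier G"
  by (auto simp: sg_def ag_def)

lemma HH_sub: "subgroup HH G"
  unfolding HH_def by (rule generate_is_subgroup[OF gens_c])

lemma HH_c: "x \<in> HH \<Longrightarrow> x \<in> carrier G"
  using subgroup.mem_carrier[OF HH_sub] by blast

lemma sg_HH: "(d^^m) s \<in> HH"
proof -
  have "sg (Suc m) \<in> sg ` {1..}" by (rule imageI) simp
  then show ?thesis unfolding HH_def by (auto intro: generate.incl)
qed

lemma ag_HH: "(d^^m) a \<in> HH"
proof -
  have "ag (Suc m) \<in> ag ` {1..}" by (rule imageI) simp
  then show ?thesis unfolding HH_def by (auto intro: generate.incl)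
qed

lemma s_HH: "s \<in> HH" using sg_HH[of 0] by simp
lemma a_HH: "a \<in> HH" using ag_HH[of 0] by simp

lemma HH_d: "x \<in> HH \<Longrightarrow> d x \<in> HH"
  unfolding HH_def
proof (induction rule: generate.induct)
  case one
  then show ?case by (simp add: generate.one)
next
  case (incl h)
  then obtain m where "h = (d^^m) s \<or> h = (d^^m) a"
    by (auto simp: sg_def ag_def)
  then show ?case using sg_HH[of "Suc m"] ag_HH[of "Suc m"] unfolding HH_def by auto
next
  case (inv h)
  then obtain m where m: "h = (d^^m) s \<or> h = (d^^m) a"
    by (auto simp: sg_def ag_def)
  have "d h \<in> sg ` {1..} \<union> ag ` {1..}"
  proof -
    have "sg (Suc (Suc m)) \<in> sg ` {1..}" "ag (Suc (Suc m)) \<in> ag ` {1..}" by (rule imageI, simp)+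
    then show ?thesis using m by auto
  qed
  then have "inv (d h) \<in> generate G (sg ` {1..} \<union> ag ` {1..})" by (rule generate.inv)
  moreover have "h \<in> carrier G" using inv gens_c by blast
  ultimately show ?case by simp
next
  case (eng h1 h2)
  have c: "h1 \<in> carrier G" "h2 \<in> carrier G" using generate_in_carrier[OF gens_c] eng.hyps by auto
  then show ?case using eng.IH by (simp add: generate.eng)
qed

lemma dswap[simp]: "(d^^n) (d x) = d ((d^^n) x)"
  by (induction n) auto

lemma brel_imp_conds:
  assumes B: "B_relations G sg ag"
  shows "condA HH \<and> condB \<and> condC HH \<and> condD \<and> condE"
proof -
  have R: "(j \<ge> i + 2 \<longrightarrow>
         sg j \<otimes> sg i = sg i \<otimes> sg j \<and> ag j \<otimes> sg i = sg i \<otimes> ag j) \<and>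
      (j + 1 \<le> i \<longrightarrow>
         ag j \<otimes> sg i = sg (i + 1) \<otimes> ag j \<and> ag j \<otimes> ag i = ag (i + 1) \<otimes> ag j) \<and>
      (j = i + 1 \<longrightarrow>
         sg j \<otimes> sg i \<otimes> sg j = sg i \<otimes> sg j \<otimes> sg i \<and>
         sg i \<otimes> sg j \<otimes> ag i = ag j \<otimes> sg i \<and>
         sg j \<otimes> sg i \<otimes> ag j = ag i \<otimes> sg i)" if "1 \<le> i" "1 \<le> j" for i j
    using B that unfolding B_relations_def by blast
  have b: "d s \<otimes> s \<otimes> d s = s \<otimes> d s \<otimes> s \<and> s \<otimes> d s \<otimes> a = d a \<otimes> s \<and> d s \<otimes> s \<otimes> d a = a \<otimes> s"
    using R[of "Suc 0" "Suc (Suc 0)"] by simp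
  have cB: condB using b unfolding condB_def by (simp add: m_assoc)
  have cD: condD using b unfolding condD_def by (simp add: m_assoc)
  have cE: condE using b unfolding condE_def by (simp add: m_assoc)
  have gA: "s \<otimes> (d^^2) x = (d^^2) x \<otimes> s" if "x \<in> sg ` {1..} \<union> ag ` {1..}" for x
  proof -
    from that obtain m where "x = (d^^m) s \<or> x = (d^^m) a" by (auto simp: sg_def ag_def)
    moreover have "d (d ((d^^m) s)) \<otimes> s = s \<otimes> d (d ((d^^m) s)) \<and> d (d ((d^^m) a)) \<otimes> s = s \<otimes> d (d ((d^^m) a))"
      using R[of "Suc 0" "Suc (Suc (Suc m))"] by simp
    ultimately show ?thesis by (auto simp: d2)
  qed
  have cA: "condA HH" unfolding condA_def
  proof
    fix h assume "h \<in> HH"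
    then show "s \<otimes> d (d h) = d (d h) \<otimes> s"
      using gen_comm[OF gens_c s_c gA, of h] unfolding HH_def by (simp add: d2)
  qed
  have gC: "a \<otimes> (d^^1) x = (d^^2) x \<otimes> a" if "x \<in> sg ` {1..} \<union> ag ` {1..}" for x
  proof -
    from that obtain m where "x = (d^^m) s \<or> x = (d^^m) a" by (auto simp: sg_def ag_def)
    moreover have "a \<otimes> d ((d^^m) s) = d (d ((d^^m) s)) \<otimes> a \<and> a \<otimes> d ((d^^m) a) = d (d ((d^^m) a)) \<otimes> a"
      using R[of "Suc (Suc m)" "Suc 0"] by simp
    ultimately show ?thesis by (auto simp: d2)
  qed
  have cC: "condC HH" unfolding condC_def
  proof
    fix h assume "h \<in> HH"
    then show "a \<otimes> d h = d (d h) \<otimes> a"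
      using gen_comm[OF gens_c a_c gC, of h] unfolding HH_def by (simp add: d2)
  qed
  show ?thesis using cA cB cC cD cE by blast
qed

lemma conds_imp_brel:
  assumes cA: "condA HH" and cB: condB and cC: "condC HH" and cD: condD and cE: condE
  shows "B_relations G sg ag"
proof -
  have LA: "(d^^n) s \<otimes> (d^^n) (d (d h)) = (d^^n) (d (d h)) \<otimes> (d^^n) s" if "h \<in> HH" for n h
  proof -
    have "s \<otimes> d (d h) = d (d h) \<otimes> s" using cA that unfolding condA_def by blast
    from arg_cong[OF this, of "d^^n"] show ?thesis using that HH_c by simp
  qed
  have LC: "(d^^n) a \<otimes> (d^^n) (d h) = (d^^n) (d (d h)) \<otimes> (d^^n) a" if "h \<in> HH" for n h
  proof -
    have "a \<otimes> d h = d (d h) \<otimes> a" using cC that unfolding condC_def by blast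
    from arg_cong[OF this, of "d^^n"] show ?thesis using that HH_c by simp
  qed
  have LB: "(d^^n) (d s) \<otimes> (d^^n) s \<otimes> (d^^n) (d s) = (d^^n) s \<otimes> (d^^n) (d s) \<otimes> (d^^n) s" for n
  proof -
    have "d s \<otimes> s \<otimes> d s = s \<otimes> d s \<otimes> s" using cB unfolding condB_def by (simp add: m_assoc)
    from arg_cong[OF this, of "d^^n"] show ?thesis by simp
  qed
  have LD: "(d^^n) (d s) \<otimes> (d^^n) s \<otimes> (d^^n) (d a) = (d^^n) a \<otimes> (d^^n) s" for n
  proof -
    have "d s \<otimes> s \<otimes> d a = a \<otimes> s" using cD unfolding condD_def by (simp add: m_assoc)
    from arg_cong[OF this, of "d^^n"] show ?thesis by simp
  qed
  have LE: "(d^^n) s \<otimes> (d^^n) (d s) \<otimes> (d^^n) a = (d^^n) (d a) \<otimes> (d^^n) s" for n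
  proof -
    have "s \<otimes> d s \<otimes> a = d a \<otimes> s" using cE unfolding condE_def by (simp add: m_assoc)
    from arg_cong[OF this, of "d^^n"] show ?thesis by simp
  qed
  show ?thesis unfolding B_relations_def
  proof (intro allI impI conjI)
    fix i j :: nat assume i1: "1 \<le> i" and j1: "1 \<le> j"
    obtain n where i: "i = Suc n" using i1 by (cases i) auto
    obtain p where j: "j = Suc p" using j1 by (cases j) auto
    {
      assume "i + 2 \<le> j"
      then obtain k where p: "p = Suc (Suc (n + k))" using i j by (metis add_Suc_right add_2_eq_Suc' le_iff_add add.commute Suc_le_mono plus_1_eq_Suc) 
      show "sg j \<otimes> sg i = sg i \<otimes> sg j"
        using LA[OF sg_HH[of k], of n] i j p by (simp add: dnm)
      show "ag j \<otimes> sg i = sg i \<otimes> ag j"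
        using LA[OF ag_HH[of k], of n] i j p by (simp add: dnm)
    }
    {
      assume "j + 1 \<le> i"
      then obtain k where n: "n = Suc (p + k)" using i j by (metis Suc_le_mono le_iff_add add_Suc plus_1_eq_Suc add.commute)
      show "ag j \<otimes> sg i = sg (i + 1) \<otimes> ag j"
        using LC[OF sg_HH[of k], of p] i j n by (simp add: dnm)
      show "ag j \<otimes> ag i = ag (i + 1) \<otimes> ag j"
        using LC[OF ag_HH[of k], of p] i j n by (simp add: dnm)
    }
    {
      assume "j = i + 1"
      then have p: "p = Suc n" using i j by simp
      show "sg j \<otimes> sg i \<otimes> sg j = sg i \<otimes> sg j \<otimes> sg i" using LB[of n] i j p by simp
      show "sg i \<otimes> sg j \<otimes> ag i = ag j \<otimes> sg i" using LE[of n] i j p by simp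
      show "sg j \<otimes> sg i \<otimes> ag j = ag i \<otimes> sg i" using LD[of n] i j p by simp
    }
  qed
qed

end

theorem proposition2p12:
  fixes G (structure) and d :: "'a \<Rightarrow> 'a" and a s :: 'a
  assumes "group G"
    and "d \<in> hom G G"
    and "a \<in> carrier G" and "s \<in> carrier G"
  defines "sig \<equiv> (\<lambda>i::nat. (d ^^ (i - 1)) s)"
    and "al \<equiv> (\<lambda>i::nat. (d ^^ (i - 1)) a)"
  defines "H \<equiv> generate G (sig ` {1..} \<union> al ` {1..})"
  shows "ald_system H (ald_star G d s) (ald_circ G d a) \<longleftrightarrow> B_relations G sig al"
proof -
  interpret L: aldl G d a s
    using assms(1-4) by (simp add: aldl_def aldl_axioms_def)
  have e1: "sig = L.sg" unfolding sig_def by (rule ext) (simp add: L.sg_def)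
  have e2: "al = L.ag" unfolding al_def by (rule ext) (simp add: L.ag_def)
  have e3: "H = L.HH" unfolding H_def L.HH_def e1 e2 ..
  show ?thesis
    unfolding e1 e2 e3
    using L.conds_imp_ald[OF L.HH_sub L.s_HH L.a_HH L.HH_d]
      L.ald_imp_conds[OF L.HH_sub L.s_HH L.a_HH]
      L.brel_imp_conds L.conds_imp_brel
    by blast
qed

end
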